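(* For every integer $k\ge0$ the formal power series $\psi_k(x):=-x^{2k}-\sum_{i\ge k}{i\brack k}x^{2i+1}$ is symplectic, and for $k\ge1$ it equals $\frac{1}{(2k-1)!}\sum_{i\ge1}(-1)^{i-1}E_{i-1}^{(2k-1)}(0)\,x^i$, where $E^{(2k-1)}$ denotes the $(2k-1)$-st derivative.
   Context: A formal power series $\varphi(x)=\sum_{i\ge0}\gamma_i x^i$ is called symplectic if for every $m\ge1$ one has $\sum_{k=0}^{m-1}(-1)^k\binom{m-1}{k}\gamma_{m+k}=0$. The Euler polynomials $E_n(x)$ are defined by $\frac{2e^{xt}}{e^t+1}=\sum_{n\ge0}E_n(x)\frac{t^n}{n!}$. For $n\ge0$ the integers ${n\brack i}$ are defined by $x\big(x^{2n}-E_{2n}(x)\big)=\sum_i {n\brack i}x^{2i}$; thus ${n\brack i}=0$ for $i\le0$ or $i>n$. *)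

theory Defs
  imports "HOL-Computational_Algebra.Computational_Algebra"
begin

definition symplectic :: "'a::comm_ring_1 fps \<Rightarrow> bool" where
  "symplectic \<phi> \<longleftrightarrow>
     (\<forall>m\<ge>1. (\<Sum>k=0..m-1. (-1)^k * of_nat ((m-1) choose k) * fps_nth \<phi> (m+k)) = 0)"

text \<open>Bivariate generating function 2 e^{xt}/(e^t+1), as a power series in t
  whose coefficients are real polynomials in x:
  e^{xt} = sum_n x^n t^n / n!, times 2/(e^t+1) (a real power series in t).\<close>
definition euler_gf :: "real poly fps" where
  "euler_gf = Abs_fps (\<lambda>n. monom (1 / fact n) n) *
              Abs_fps (\<lambda>n. [: fps_nth (fps_const 2 / (fps_exp 1 + 1)) n :])"

definition euler_poly :: "nat \<Rightarrow> real poly" where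
  "euler_poly n = smult (fact n) (fps_nth euler_gf n)"

definition ebracket :: "nat \<Rightarrow> nat \<Rightarrow> real" where
  "ebracket n i = coeff ([:0, 1:] * (monom 1 (2*n) - euler_poly (2*n))) (2*i)"

definition psi :: "nat \<Rightarrow> real fps" where
  "psi k = - (fps_X ^ (2*k))
           - Abs_fps (\<lambda>n. if odd n \<and> k \<le> n div 2 then ebracket (n div 2) k else 0)"

end

theory Submission imports Defs begin

definition cE :: "real fps" where "cE = fps_const 2 / (fps_exp 1 + 1)"

lemma cE_mult: "cE * (fps_exp 1 + 1) = fps_const 2"
proof -
  have h: "(fps_exp 1 + 1 :: real fps) $ 0 \<noteq> 0" by simp
  have "cE = fps_const 2 * inverse (fps_exp 1 + 1)"
    unfolding cE_def using fps_divide_unit[OF h] by simp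
  then have "cE * (fps_exp 1 + 1) = fps_const 2 * (inverse (fps_exp 1 + 1) * (fps_exp 1 + 1))"
    by (simp add: mult.assoc)
  then show ?thesis using inverse_mult_eq_1[OF h] by simp
qed

lemma cE_twist: "cE oo (-fps_X) = fps_exp 1 * cE"
proof -
  have X0: "(-fps_X :: real fps) $ 0 = 0" by simp
  have a: "(cE oo (-fps_X)) * (fps_exp (-1) + 1) = fps_const 2"
  proof -
    have "(cE * (fps_exp 1 + 1)) oo (-fps_X) = fps_const 2" using cE_mult by simp
    then show ?thesis by (simp add: fps_compose_mult_distrib[OF X0] fps_compose_add_distrib)
  qed
  have b: "(fps_exp 1 * cE) * (fps_exp (-1) + 1) = fps_const 2"
  proof -
    have e: "fps_exp (1::real) * fps_exp (-1) = 1" using fps_exp_add_mult[of "1::real" "-1"] by simp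
    have "(fps_exp 1 * cE) * (fps_exp (-1) + 1) = cE * (fps_exp 1 * fps_exp (-1) + fps_exp 1)"
      by (simp add: algebra_simps)
    also have "\<dots> = cE * (fps_exp 1 + 1)" using e by (simp add: add.commute)
    finally show ?thesis using cE_mult by simp
  qed
  have nz: "(fps_exp (-1) + 1 :: real fps) \<noteq> 0"
  proof
    assume "(fps_exp (-1) + 1 :: real fps) = 0"
    then have "(fps_exp (-1) + 1 :: real fps) $ 0 = 0" by simp
    then show False by simp
  qed
  from a b nz show ?thesis by (metis mult_right_cancel)
qed

lemma cE_rel: "(-1)^m * cE $ m + cE $ m = (if m = 0 then 2 else 0)"
proof -
  have "(cE oo (-fps_X)) $ m = (-1)^m * cE $ m" by (simp add: fps_compose_uminus')
  moreover have "(cE oo (-fps_X)) $ m + cE $ m = (cE * (fps_exp 1 + 1)) $ m"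
    by (simp add: cE_twist algebra_simps)
  ultimately show ?thesis using cE_mult by simp
qed

lemma cE0: "cE $ 0 = 1" using cE_rel[of 0] by simp
lemma cE_even: "even m \<Longrightarrow> m \<noteq> 0 \<Longrightarrow> cE $ m = 0" using cE_rel[of m] by simp

definition ev :: "nat \<Rightarrow> real \<Rightarrow> real" where "ev m x = fact m * (fps_exp x * cE) $ m"

lemma ev_refl: "ev m (1 - x) = (-1)^m * ev m x"
proof -
  have X0: "(-fps_X :: real fps) $ 0 = 0" by simp
  have "fps_exp (1 - x) * cE = (fps_exp x * cE) oo (-fps_X)"
    by (simp add: fps_compose_mult_distrib[OF X0] cE_twist fps_exp_add_mult[symmetric] algebra_simps)
  then have "(fps_exp (1 - x) * cE) $ m = (-1)^m * (fps_exp x * cE) $ m"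
    by (simp add: fps_compose_uminus')
  then show ?thesis by (simp add: ev_def)
qed

lemma ev_shift: "ev m (x + h) = (\<Sum>i=0..m. of_nat (m choose i) * h^i * ev (m - i) x)"
proof -
  have eq: "fps_exp (x + h) * cE = fps_exp h * (fps_exp x * cE)"
    by (simp add: fps_exp_add_mult algebra_simps)
  have "ev m (x + h) = fact m * (fps_exp h * (fps_exp x * cE)) $ m" unfolding ev_def eq ..
  also have "\<dots> = fact m * (\<Sum>i=0..m. h^i / fact i * (fps_exp x * cE) $ (m - i))"
    by (simp only: fps_mult_nth fps_exp_nth of_nat_fact)
  also have "\<dots> = (\<Sum>i=0..m. of_nat (m choose i) * h^i * ev (m - i) x)"
    unfolding sum_distrib_left
  proof (rule sum.cong[OF refl])
    fix i assume "i \<in> {0..m}"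
    then have im: "i \<le> m" by simp
    have "real (m choose i) = fact m / (fact i * fact (m - i))"
      using binomial_fact[OF im] by simp
    then show "fact m * (h ^ i / fact i * (fps_exp x * cE) $ (m - i)) =
        of_nat (m choose i) * h ^ i * ev (m - i) x"
      by (simp add: ev_def field_simps)
  qed
  finally show ?thesis .
qed

lemma euler_poly_nth: "euler_gf $ m = (\<Sum>i=0..m. monom (1 / fact i) i * [: cE $ (m - i) :])"
  by (simp add: euler_gf_def fps_mult_nth cE_def)

lemma poly_euler: "poly (euler_poly m) x = ev m x"
  unfolding euler_poly_def euler_poly_nth ev_def fps_mult_nth fps_exp_nth
  by (simp add: poly_sum poly_monom sum_distrib_left mult_ac)

lemma coeff_euler: "coeff (euler_poly m) j = (if j \<le> m then fact m / fact j * cE $ (m - j) else 0)"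
proof -
  have "\<And>i. cE $ (m - i) * (if i = j then 1 / fact i else 0) = (if i = j then cE $ (m-j) / fact j else 0)"
    by simp
  then show ?thesis by (simp add: euler_poly_def euler_poly_nth coeff_sum coeff_monom_mult)
qed


lemma sne: "Suc (2*a) \<noteq> 2*(k::nat)"
proof
  assume "Suc (2*a) = 2*k"
  then have "even (Suc (2*a))" by simp
  then show False by simp
qed

lemma a5: "k \<ge> (1::nat) \<Longrightarrow> 2*a \<noteq> 2*k-1"
proof
  assume "k \<ge> 1" "2*a = 2*k-1"
  then have "Suc (2*a) = 2*k" by simp
  then show False using sne by blast
qed

lemma a3: "(m::nat) > 2*k-1 \<Longrightarrow> \<not> even m \<Longrightarrow> k \<ge> 1 \<Longrightarrow> even (m - (2*k-1)) \<and> m - (2*k-1) \<noteq> 0"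
proof -
  assume h: "m > 2*k-1" "\<not> even m" "k \<ge> 1"
  then obtain b where b: "m = 2*b+1" by (meson oddE)
  then have "m - (2*k-1) = 2*(b+1-k)" using h by auto
  then show ?thesis using h by auto
qed

lemma hd_coeff: "poly ((pderiv ^^ r) (p :: real poly)) 0 / fact r = coeff p r"
  by (simp add: poly_0_coeff_0 coeff_higher_pderiv pochhammer_fact[symmetric])

lemma ebr: "k \<ge> 1 \<Longrightarrow> ebracket a k = - coeff (euler_poly (2*a)) (2*k-1)"
proof -
  assume k: "k \<ge> 1"
  obtain j where e: "2*k = Suc j" "j = 2*k-1" using k by (cases "2*k") auto
  have "[:0, 1:] * (monom 1 (2*a) - euler_poly (2*a)) = pCons 0 (monom 1 (2*a) - euler_poly (2*a))"
    by simp
  then have "ebracket a k = coeff (monom 1 (2*a) - euler_poly (2*a)) (2*k-1)"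
    unfolding ebracket_def by (simp only: e(1) coeff_pCons_Suc, simp add: e(2))
  moreover have "2*a \<noteq> 2*k-1" using k by (rule a5)
  ultimately show ?thesis by (simp add: coeff_monom)
qed

lemma psi_eq:
  assumes k: "k \<ge> 1"
  shows "psi k = Abs_fps (\<lambda>i. if i = 0 then 0 else
        (-1) ^ (i - 1) * poly ((pderiv ^^ (2*k - 1)) (euler_poly (i - 1))) 0 / fact (2*k - 1))"
proof (rule fps_ext)
  fix i
  show "psi k $ i = Abs_fps (\<lambda>i. if i = 0 then 0 else
        (-1) ^ (i - 1) * poly ((pderiv ^^ (2*k - 1)) (euler_poly (i - 1))) 0 / fact (2*k - 1)) $ i"
  proof (cases i)
    case 0
    then show ?thesis using k by (simp add: psi_def)
  next
    case (Suc m)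
    have R: "Abs_fps (\<lambda>i. if i = 0 then 0 else
        (-1) ^ (i - 1) * poly ((pderiv ^^ (2*k - 1)) (euler_poly (i - 1))) 0 / fact (2*k - 1)) $ i
        = (-1)^m * coeff (euler_poly m) (2*k-1)"
    proof -
      have "Abs_fps (\<lambda>i. if i = 0 then 0 else
        (-1) ^ (i - 1) * poly ((pderiv ^^ (2*k - 1)) (euler_poly (i - 1))) 0 / fact (2*k - 1)) $ i
        = (-1)^m * poly ((pderiv ^^ (2*k - 1)) (euler_poly m)) 0 / fact (2*k-1)" using Suc by simp
      also have "\<dots> = (-1)^m * (poly ((pderiv ^^ (2*k - 1)) (euler_poly m)) 0 / fact (2*k-1))"
        by simp
      also have "\<dots> = (-1)^m * coeff (euler_poly m) (2*k-1)" by (simp only: hd_coeff)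
      finally show ?thesis .
    qed
    show ?thesis
    proof (cases "even m")
      case True
      then obtain a where a: "m = 2*a" by blast
      have oi: "odd i" "i div 2 = a" "i \<noteq> 2*k" using Suc a sne by auto
      have L: "psi k $ i = - (if k \<le> a then ebracket a k else 0)"
        using oi by (simp add: psi_def)
      show ?thesis
      proof (cases "k \<le> a")
        case True
        then show ?thesis unfolding L R using ebr[OF k, of a] a by simp
      next
        case False
        then have "\<not> 2*k-1 \<le> m" using a k by simp
        then have "coeff (euler_poly m) (2*k-1) = 0" by (simp add: coeff_euler)
        then show ?thesis unfolding L R using False by simp
      qed
    next
      case False
      have L: "psi k $ i = - (if i = 2*k then 1 else 0)"
        using False Suc by (simp add: psi_def)
      consider "m = 2*k-1" | "m < 2*k-1" | "m > 2*k-1" by linarith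
      then show ?thesis
      proof cases
        case 1
        then have "coeff (euler_poly m) (2*k-1) = 1" by (simp add: coeff_euler cE0)
        moreover have "i = 2*k" "odd m" using 1 Suc k by auto
        ultimately show ?thesis unfolding L R by simp
      next
        case 2
        then have "coeff (euler_poly m) (2*k-1) = 0" by (simp add: coeff_euler)
        moreover have "i \<noteq> 2*k" using 2 Suc k by simp
        ultimately show ?thesis unfolding L R by simp
      next
        case 3
        have ev: "even (m - (2*k-1))" "m - (2*k-1) \<noteq> 0" using a3[OF 3 False k] by auto
        have "coeff (euler_poly m) (2*k-1) = 0" using 3 cE_even[OF ev] by (simp add: coeff_euler)
        moreover have "i \<noteq> 2*k" using 3 Suc k by simp
        ultimately show ?thesis unfolding L R by simp
      qed
    qed
  qed
qed


lemma even_coeffs: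
  fixes p :: "real poly"
  assumes "\<And>x. poly p (-x) = poly p x" and "odd r"
  shows "coeff p r = 0"
proof -
  have "poly (pcompose p [:0, -1:]) = poly p" using assms(1) by (auto simp: poly_pcompose)
  then have "pcompose p [:0, -1:] = p" by (simp add: poly_eq_poly_eq_iff)
  then have "(-1)^r * coeff p r = coeff p r" by (metis coeff_pcompose_linear)
  then show ?thesis using assms(2) by simp
qed

definition lam :: "nat \<Rightarrow> real \<Rightarrow> real poly \<Rightarrow> real" where
  "lam N x p = (\<Sum>j\<le>N. coeff p j * ev j (x + 1/2))"

lemma lam_add: "lam N x (p + q) = lam N x p + lam N x q"
  by (simp add: lam_def algebra_simps sum.distrib)

lemma lam_smult: "lam N x (smult c p) = c * lam N x p"
  by (simp add: lam_def sum_distrib_left mult_ac)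

lemma lam_sum: "lam N x (\<Sum>a\<in>A. f a) = (\<Sum>a\<in>A. lam N x (f a))"
  by (induction A rule: infinite_finite_induct) (auto simp: lam_add lam_def sum.distrib algebra_simps)

lemma ev_lam:
  assumes "m \<le> N"
  shows "ev m x = lam N x ([:-(1/2), 1:]^m)"
proof -
  have "ev m x = ev m ((x + 1/2) + (-(1/2)))" by simp
  also have "\<dots> = (\<Sum>i=0..m. of_nat (m choose i) * (-(1/2))^i * ev (m - i) (x + 1/2))"
    by (rule ev_shift)
  also have "\<dots> = (\<Sum>j=0..m. of_nat (m choose j) * (-(1/2))^(m-j) * ev j (x + 1/2))"
    by (subst sum.atLeastAtMost_rev) (auto intro!: sum.cong simp: binomial_symmetric[symmetric])
  also have "\<dots> = (\<Sum>j\<le>N. coeff ([:-(1/2), 1:]^m) j * ev j (x + 1/2))"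
  proof -
    have "(\<Sum>j\<le>N. coeff ([:-(1/2), 1:]^m) j * ev j (x + 1/2)) =
          (\<Sum>j\<le>N. if j \<le> m then of_nat (m choose j) * (-(1/2))^(m-j) * ev j (x + 1/2) else 0)"
      by (rule sum.cong) (auto simp: coeff_linear_poly_power coeff_eq_0 degree_linear_power)
    also have "\<dots> = (\<Sum>j\<in>{..N} \<inter> {j. j \<le> m}. of_nat (m choose j) * (-(1/2))^(m-j) * ev j (x + 1/2))"
      by (simp add: sum.inter_restrict)
    also have "{..N} \<inter> {j. j \<le> m} = {0..m}" using assms by auto
    finally show ?thesis by simp
  qed
  finally show ?thesis by (simp add: lam_def)
qed

lemma G_even: "even j \<Longrightarrow> ev j (1/2 - x) = ev j (x + 1/2)"
  using ev_refl[of j "x + 1/2"] by simp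

lemma lam_even:
  assumes "\<And>j. odd j \<Longrightarrow> coeff q j = 0"
  shows "lam N (-x) q = lam N x q"
  unfolding lam_def
proof (rule sum.cong[OF refl])
  fix j
  show "coeff q j * ev j (- x + 1 / 2) = coeff q j * ev j (x + 1 / 2)"
    by (cases "even j") (auto simp: G_even assms)
qed

lemma Q_even:
  "(\<Sum>j\<le>n. of_nat (n choose j) * ev (n + j) (-x)) = (\<Sum>j\<le>n. of_nat (n choose j) * ev (n + j) x)"
proof -
  define y :: "real poly" where "y = [:-(1/2), 1:]"
  define q where "q = (\<Sum>j\<le>n. smult (of_nat (n choose j)) (y ^ (n + j)))"
  have Q: "(\<Sum>j\<le>n. of_nat (n choose j) * ev (n + j) z) = lam (2*n) z q" for z
    unfolding q_def lam_sum lam_smult y_def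
    by (rule sum.cong) (auto simp: ev_lam)
  have qy: "q = y^n * (y + 1)^n"
  proof -
    have "(y + 1)^n = (\<Sum>j\<le>n. of_nat (n choose j) * y^j * 1^(n-j))"
      by (rule binomial_ring)
    then have "y^n * (y + 1)^n = (\<Sum>j\<le>n. smult (of_nat (n choose j)) (y ^ (n + j)))"
      by (simp add: sum_distrib_left power_add of_nat_poly mult_ac)
    then show ?thesis by (simp add: q_def)
  qed
  have "poly q z = (z^2 - 1/4)^n" for z
  proof -
    have py: "poly y z = z - 1/2" "poly (y + 1) z = z + 1/2" by (simp_all add: y_def)
    have "poly q z = (z - 1/2)^n * (z + 1/2)^n" by (simp only: qy poly_mult poly_power py)
    also have "\<dots> = ((z - 1/2) * (z + 1/2))^n" by (simp add: power_mult_distrib)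
    also have "(z - 1/2) * (z + 1/2) = z^2 - 1/4" by (simp add: algebra_simps power2_eq_square)
    finally show ?thesis .
  qed
  then have "\<And>z. poly q (-z) = poly q z" by simp
  then have "\<And>j. odd j \<Longrightarrow> coeff q j = 0" using even_coeffs by blast
  then show ?thesis unfolding Q by (rule lam_even)
qed

lemma binom_coeff_sum:
  "odd r \<Longrightarrow> (\<Sum>j\<le>n. of_nat (n choose j) * coeff (euler_poly (n + j)) r) = 0"
proof -
  assume r: "odd r"
  define PP where "PP = (\<Sum>j\<le>n. smult (of_nat (n choose j)) (euler_poly (n + j)))"
  have "\<And>x. poly PP x = (\<Sum>j\<le>n. of_nat (n choose j) * ev (n + j) x)"
    by (simp add: PP_def poly_sum poly_euler)
  then have "\<And>x. poly PP (-x) = poly PP x" using Q_even by simp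
  then have "coeff PP r = 0" using even_coeffs r by blast
  then show ?thesis by (simp add: PP_def coeff_sum)
qed

lemma symp_pos:
  assumes k: "k \<ge> 1"
  shows "symplectic (psi k)"
  unfolding symplectic_def psi_eq[OF k]
proof (intro allI impI)
  fix m :: nat assume m: "m \<ge> 1"
  then obtain n where n: "m = Suc n" by (cases m) auto
  define r where "r = 2*k - 1"
  have r: "odd r" using k by (simp add: r_def)
  have "(\<Sum>j=0..m-1. (-1)^j * of_nat ((m-1) choose j) *
      Abs_fps (\<lambda>i. if i = 0 then 0 else
        (-1) ^ (i - 1) * poly ((pderiv ^^ (2*k - 1)) (euler_poly (i - 1))) 0 / fact (2*k - 1)) $ (m + j))
    = (\<Sum>j\<le>n. (-1)^n * (of_nat (n choose j) * coeff (euler_poly (n + j)) r))"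
  proof (rule sum.cong)
    show "{0..m-1} = {..n}" using n by auto
  next
    fix j assume "j \<in> {..n}"
    have s: "(-1::real)^j * (-1)^(n+j) = (-1)^n"
      by (simp add: power_add mult_ac flip: power_mult_distrib)
    have "Abs_fps (\<lambda>i. if i = 0 then 0 else
        (-1) ^ (i - 1) * poly ((pderiv ^^ (2*k - 1)) (euler_poly (i - 1))) 0 / fact (2*k - 1)) $ (m + j)
      = (-1)^(n+j) * (poly ((pderiv ^^ r) (euler_poly (n+j))) 0 / fact r)"
      using n by (simp add: r_def)
    also have "\<dots> = (-1)^(n+j) * coeff (euler_poly (n+j)) r" by (simp only: hd_coeff)
    finally show "(-1)^j * of_nat ((m-1) choose j) *
      Abs_fps (\<lambda>i. if i = 0 then 0 else
        (-1) ^ (i - 1) * poly ((pderiv ^^ (2*k - 1)) (euler_poly (i - 1))) 0 / fact (2*k - 1)) $ (m + j)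
      = (-1)^n * (of_nat (n choose j) * coeff (euler_poly (n + j)) r)"
      using n s by (simp add: mult_ac flip: s)
  qed
  also have "\<dots> = 0" by (simp add: sum_distrib_left[symmetric] binom_coeff_sum[OF r])
  finally show "(\<Sum>j=0..m-1. (-1)^j * of_nat ((m-1) choose j) *
      Abs_fps (\<lambda>i. if i = 0 then 0 else
        (-1) ^ (i - 1) * poly ((pderiv ^^ (2*k - 1)) (euler_poly (i - 1))) 0 / fact (2*k - 1)) $ (m + j)) = 0" .
qed

lemma symp_0: "symplectic (psi 0)"
proof -
  have "\<And>a. ebracket a 0 = 0" by (simp add: ebracket_def)
  then have "\<And>i. psi 0 $ i = (if i = 0 then -1 else 0)" by (simp add: psi_def)
  then show ?thesis by (simp add: symplectic_def)
qed

theorem lemma5p3: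
  fixes k :: nat
  shows "symplectic (psi k) \<and>
    (k \<ge> 1 \<longrightarrow>
      psi k = Abs_fps (\<lambda>i. if i = 0 then 0 else
        (-1) ^ (i - 1) * poly ((pderiv ^^ (2*k - 1)) (euler_poly (i - 1))) 0 / fact (2*k - 1)))"
proof (cases "k = 0")
  case True
  then show ?thesis using symp_0 by simp
next
  case False
  then show ?thesis using symp_pos psi_eq by simp
qed

end
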